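(* Let $N\geq1$ and let $r$ be an integer with $-(N-1)\leq r\leq N-1$ and $r\neq\pm(N-2)$. Define $$f^{\mathrm{rnk}}_N(r)=\max\Big\{\sum_{l=1}^{|\Lambda|}N_l^2\ :\ \Lambda\text{ a partition of }\{1,\dots,N\}\text{ with }\max\Lambda-|\Lambda|\leq r\Big\}.$$ Then: (i) if $N+r$ is odd, $f^{\mathrm{rnk}}_N(r)=\frac14(N+r+1)^2+\frac12(N-r-1)$; (ii) if $N+r=10$ and $N\geq 8$, $f^{\mathrm{rnk}}_N(r)=34-r$; (iii) if $N+r=16$ and $N\geq12$, $f^{\mathrm{rnk}}_N(r)=76-r$; (iv) if $N+r$ is even and neither (ii) nor (iii) applies, $f^{\mathrm{rnk}}_N(r)=\frac14(N+r)^2+\frac12(N-r)+2$.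
   Context: A partition $\Lambda=\{A_1,\dots,A_{|\Lambda|}\}$ of $\{1,\dots,N\}$ is a collection of nonempty pairwise disjoint subsets whose union is $\{1,\dots,N\}$; $|\Lambda|$ is the number of subsets, $N_l=|A_l|$, and $\max\Lambda=\max_lN_l$. The quantity $\max\Lambda-|\Lambda|$ is Dyson's rank of the partition; its possible values are the integers from $-(N-1)$ to $N-1$ except $\pm(N-2)$. *)

theory Defs
  imports Complex_Main "HOL-Library.Disjoint_Sets"
begin

definition dyson_rank :: "nat set set \<Rightarrow> int" where
  "dyson_rank P = int (Max (card ` P)) - int (card P)"

definition f_rnk :: "nat \<Rightarrow> int \<Rightarrow> nat" where
  "f_rnk N r = Max {(\<Sum>A\<in>P. (card A)^2) | P. partition_on {1..N} P \<and> dyson_rank P \<le> r}"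

end

theory Submission
  imports Defs
begin

lemma arith_even:
  fixes u T q S :: int
  assumes "0 \<le> q" "q \<le> u" "q \<le> T" "0 \<le> S" "S \<le> q*T" "even T" "0 \<le> T"
  shows "4*(u*(u+1)+T+S) + 1 \<le> (2*u+1+T)^2"
proof -
  have "q*T \<le> u*T" using assms by (simp add: mult_right_mono)
  moreover have "2*T \<le> T*T"
  proof (cases "T = 0")
    case False
    then have "T \<ge> 2" using assms by presburger
    then show ?thesis using assms by (simp add: mult_right_mono)
  qed simp
  ultimately show ?thesis using assms by (simp add: power2_eq_square algebra_simps)
qed

lemma arith_odd:
  fixes u T q S :: int
  assumes "0 \<le> q" "q \<le> u" "q \<le> T" "0 \<le> S" "S \<le> q*T" "S \<le> q^2 + (T-q)^2" "odd T" "0 \<le> T"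
    and "\<not> (u = 3 \<and> T = 3)" "\<not> (u = 5 \<and> T = 5)"
  shows "4*(u*(u+1)+T+S) + 2*(2*u+1+T) \<le> (2*u+1+T)^2 + 8"
proof -
  have T1: "T \<ge> 1" using assms by presburger
  have A: "q*(T-1) \<le> u*(T-1)" using assms T1 by (simp add: mult_right_mono)
  have "T = 1 \<or> T = 3 \<or> T = 5 \<or> T \<ge> 7" using T1 \<open>odd T\<close> by presburger
  then consider "T = 1" | "T = 3" | "T = 5" | "T \<ge> 7" by blast
  then show ?thesis
  proof cases
    case 1
    then show ?thesis using assms A by (simp add: power2_eq_square algebra_simps)
  next
    case 2
    then have "q = 0 \<or> q = 1 \<or> q = 2 \<or> q = 3" using assms by auto
    then show ?thesis using assms 2 by (auto simp add: power2_eq_square algebra_simps)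
  next
    case 3
    then have "q = 0 \<or> q = 1 \<or> q = 2 \<or> q = 3 \<or> q = 4 \<or> q = 5" using assms by auto
    then show ?thesis using assms 3 by (auto simp add: power2_eq_square algebra_simps)
  next
    case 4
    have B: "0 \<le> (T-1)*(T-7)" using 4 by simp
    have C: "q*T \<le> T*T" using assms by (simp add: mult_right_mono)
    show ?thesis using assms A B C by (simp add: power2_eq_square algebra_simps)
  qed
qed


lemma constr2:
  fixes a b N :: nat
  assumes "1 \<le> b" "b \<le> a" "a + b \<le> N"
  defines "P \<equiv> insert {1..a} (insert {a+1..a+b} ((\<lambda>i. {i}) ` {a+b+1..N}))"
  shows "partition_on {1..N} P" and "card P = N - a - b + 2" and "Max (card ` P) = a"
    and "(\<Sum>A\<in>P. (card A)^2) = a^2 + b^2 + (N - a - b)"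
proof -
  have U: "\<Union>P = {1..N}" unfolding P_def using assms by auto
  show "partition_on {1..N} P"
  proof (rule partition_onI)
    show "\<Union>P = {1..N}" by (rule U)
    show "{} \<notin> P" unfolding P_def using assms by auto
    fix p q assume "p \<in> P" "q \<in> P" "p \<noteq> q"
    then show "disjnt p q" unfolding P_def disjnt_def by auto
  qed
  have n1: "{1..a} \<notin> insert {a+1..a+b} ((\<lambda>i. {i}) ` {a+b+1..N})"
  proof
    assume "{1..a} \<in> insert {a+1..a+b} ((\<lambda>i. {i}) ` {a+b+1..N})"
    moreover have "1 \<in> {1..a}" using assms by simp
    ultimately show False by auto
  qed
  have n2: "{a+1..a+b} \<notin> ((\<lambda>i. {i}) ` {a+b+1..N})"
  proof
    assume "{a+1..a+b} \<in> ((\<lambda>i. {i}) ` {a+b+1..N})"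
    moreover have "a+1 \<in> {a+1..a+b}" using assms by simp
    ultimately show False by auto
  qed
  have inj: "inj_on (\<lambda>i::nat. {i}) {a+b+1..N}" by (auto simp: inj_on_def)
  have cimg: "card ((\<lambda>i. {i}) ` {a+b+1..N}) = N - a - b"
    using inj by (simp add: card_image)
  show "card P = N - a - b + 2" unfolding P_def using n1 n2 cimg by simp
  have fin: "finite P" unfolding P_def by simp
  show "Max (card ` P) = a"
  proof (rule Max_eqI)
    show "finite (card ` P)" using fin by simp
    show "y \<le> a" if "y \<in> card ` P" for y using that assms unfolding P_def by auto
    show "a \<in> card ` P" unfolding P_def by force
  qed
  have "(\<Sum>A\<in>(\<lambda>i. {i}) ` {a+b+1..N}. (card A)^2) = (\<Sum>i\<in>{a+b+1..N}. (card {i})^2)"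
    using inj by (simp add: sum.reindex)
  also have "\<dots> = N - a - b" by simp
  finally show "(\<Sum>A\<in>P. (card A)^2) = a^2 + b^2 + (N - a - b)"
    unfolding P_def using n1 n2 by simp
qed

lemma constr1:
  fixes a N :: nat
  assumes "1 \<le> a" "a \<le> N"
  defines "P \<equiv> insert {1..a} ((\<lambda>i. {i}) ` {a+1..N})"
  shows "partition_on {1..N} P" and "card P = N - a + 1" and "Max (card ` P) = a"
    and "(\<Sum>A\<in>P. (card A)^2) = a^2 + (N - a)"
proof -
  have U: "\<Union>P = {1..N}" unfolding P_def using assms by auto
  show "partition_on {1..N} P"
  proof (rule partition_onI)
    show "\<Union>P = {1..N}" by (rule U)
    show "{} \<notin> P" unfolding P_def using assms by auto
    fix p q assume "p \<in> P" "q \<in> P" "p \<noteq> q"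
    then show "disjnt p q" unfolding P_def disjnt_def by auto
  qed
  have n1: "{1..a} \<notin> ((\<lambda>i. {i}) ` {a+1..N})"
  proof
    assume "{1..a} \<in> ((\<lambda>i. {i}) ` {a+1..N})"
    moreover have "1 \<in> {1..a}" using assms by simp
    ultimately show False by auto
  qed
  have inj: "inj_on (\<lambda>i::nat. {i}) {a+1..N}" by (auto simp: inj_on_def)
  have cimg: "card ((\<lambda>i. {i}) ` {a+1..N}) = N - a"
    using inj by (simp add: card_image)
  show "card P = N - a + 1" unfolding P_def using n1 cimg by simp
  have fin: "finite P" unfolding P_def by simp
  show "Max (card ` P) = a"
  proof (rule Max_eqI)
    show "finite (card ` P)" using fin by simp
    show "y \<le> a" if "y \<in> card ` P" for y using that assms unfolding P_def by auto
    show "a \<in> card ` P" unfolding P_def by force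
  qed
  have "(\<Sum>A\<in>(\<lambda>i. {i}) ` {a+1..N}. (card A)^2) = (\<Sum>i\<in>{a+1..N}. (card {i})^2)"
    using inj by (simp add: sum.reindex)
  also have "\<dots> = N - a" by simp
  finally show "(\<Sum>A\<in>P. (card A)^2) = a^2 + (N - a)"
    unfolding P_def using n1 by simp
qed


lemma sum_sq_le_sq_sum:
  fixes c :: "'a \<Rightarrow> int"
  assumes "finite F" "\<And>x. x \<in> F \<Longrightarrow> 0 \<le> c x"
  shows "(\<Sum>x\<in>F. (c x)^2) \<le> (\<Sum>x\<in>F. c x)^2"
  using assms
proof (induction F rule: finite_induct)
  case empty then show ?case by simp
next
  case (insert y F)
  have IH: "(\<Sum>x\<in>F. (c x)^2) \<le> (\<Sum>x\<in>F. c x)^2" using insert by auto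
  have "0 \<le> (\<Sum>x\<in>F. c x)" using insert by (auto intro: sum_nonneg)
  moreover have "0 \<le> c y" using insert by auto
  ultimately have "0 \<le> c y * (\<Sum>x\<in>F. c x)" by simp
  then show ?case using insert IH by (simp add: power2_eq_square algebra_simps)
qed

lemma ub_struct:
  fixes P :: "nat set set" and N :: nat
  assumes part: "partition_on {1..N} P" and N1: "N \<ge> 1"
  obtains u T q S m :: int where
    "0 \<le> q" "q \<le> u" "q \<le> T" "0 \<le> S" "S \<le> q*T" "S \<le> q^2 + (T-q)^2" "0 \<le> T" "0 \<le> m"
    "T \<noteq> 0 \<Longrightarrow> m \<ge> 1"
    "int N = u + 1 + T + m" "int (card P) = m + 1" "int (Max (card ` P)) = u + 1"
    "int (\<Sum>A\<in>P. (card A)^2) = (u+1)^2 + S + 2*T + m"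
proof -
  have finP: "finite P" using part finite_elements by blast
  have U: "\<Union>P = {1..N}" using part partition_onD1 by blast
  have finA: "finite A" if "A \<in> P" for A using U that
    by (metis Union_upper finite_atLeastAtMost finite_subset)
  have neA: "A \<noteq> {}" if "A \<in> P" for A using part that partition_onD3 by blast
  have cardA: "card A \<ge> 1" if "A \<in> P" for A using finA[OF that] neA[OF that]
    by (simp add: Suc_leI card_gt_0_iff)
  have Pne: "P \<noteq> {}" using U N1 by auto
  have sumN: "(\<Sum>A\<in>P. card A) = N"
    using card_Union_disjoint[of P] part U finA by (simp add: partition_on_def)
  define a where "a = Max (card ` P)"
  have "a \<in> card ` P" unfolding a_def using finP Pne by simp
  then obtain A0 where A0: "A0 \<in> P" "card A0 = a" by auto
  have amax: "card A \<le> a" if "A \<in> P" for A unfolding a_def using finP that by simp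
  define P' where "P' = P - {A0}"
  have finP': "finite P'" using finP P'_def by simp
  define c :: "nat set \<Rightarrow> int" where "c A = int (card A) - 1" for A
  have c0: "0 \<le> c A" if "A \<in> P'" for A using cardA that unfolding c_def P'_def by force
  have cu: "c A \<le> int a - 1" if "A \<in> P'" for A using amax that unfolding c_def P'_def by force
  define T where "T = (\<Sum>A\<in>P'. c A)"
  define S where "S = (\<Sum>A\<in>P'. (c A)^2)"
  define m where "m = int (card P')"
  define u where "u = int a - 1"
  define q where "q = (if P' = {} then 0 else Max (c ` P'))"
  have T0: "0 \<le> T" unfolding T_def using c0 by (simp add: sum_nonneg)
  have S0: "0 \<le> S" unfolding S_def by (simp add: sum_nonneg)
  have m0: "0 \<le> m" unfolding m_def by simp
  have cq: "c A \<le> q" if "A \<in> P'" for A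
    unfolding q_def using that finP' by auto
  have q0: "0 \<le> q"
  proof (cases "P' = {}")
    case True then show ?thesis unfolding q_def by simp
  next
    case False then obtain A where "A \<in> P'" by auto
    then show ?thesis using cq c0 by force
  qed
  have qex: "P' \<noteq> {} \<Longrightarrow> \<exists>A1\<in>P'. c A1 = q"
    proof -
    assume ne: "P' \<noteq> {}"
    have "Max (c ` P') \<in> c ` P'" using ne finP' by (intro Max_in) auto
    then show ?thesis unfolding q_def using ne by force
  qed
  have qu: "q \<le> u"
  proof (cases "P' = {}")
    case True then show ?thesis unfolding q_def u_def using A0 cardA by force
  next
    case False then obtain A1 where "A1 \<in> P'" "c A1 = q" using qex by auto
    then show ?thesis using cu u_def by auto
  qed
  have SqT: "S \<le> q*T"
  proof -
    have "S \<le> (\<Sum>A\<in>P'. q * c A)" unfolding S_def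
    proof (rule sum_mono)
      fix A assume "A \<in> P'"
      then show "(c A)^2 \<le> q * c A" using cq c0
        by (simp add: power2_eq_square mult_right_mono)
    qed
    then show ?thesis unfolding T_def by (simp add: sum_distrib_left)
  qed
  have qT_S2: "q \<le> T \<and> S \<le> q^2 + (T-q)^2"
  proof (cases "P' = {}")
    case True then show ?thesis unfolding q_def T_def S_def by simp
  next
    case False then obtain A1 where A1: "A1 \<in> P'" "c A1 = q" using qex by auto
    have eT: "T = q + (\<Sum>A\<in>P'-{A1}. c A)" unfolding T_def using A1 finP'
      by (simp add: sum.remove)
    have eS: "S = q^2 + (\<Sum>A\<in>P'-{A1}. (c A)^2)" unfolding S_def using A1 finP'
      by (simp add: sum.remove)
    have "(\<Sum>A\<in>P'-{A1}. (c A)^2) \<le> (\<Sum>A\<in>P'-{A1}. c A)^2"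
      using finP' c0 by (intro sum_sq_le_sq_sum) auto
    moreover have "0 \<le> (\<Sum>A\<in>P'-{A1}. c A)" using c0 by (intro sum_nonneg) auto
    ultimately show ?thesis using eT eS by simp
  qed
  have mT: "m \<ge> 1" if "T \<noteq> 0"
  proof -
    have "P' \<noteq> {}" using that unfolding T_def by auto
    then show ?thesis unfolding m_def using finP' by (simp add: Suc_leI card_gt_0_iff)
  qed
  have eN: "int N = u + 1 + T + m"
  proof -
    have "N = a + (\<Sum>A\<in>P'. card A)" using sumN A0 finP unfolding P'_def
      by (simp add: sum.remove)
    moreover have "(\<Sum>A\<in>P'. int (card A)) = T + m"
      unfolding T_def m_def c_def by (simp add: sum_subtractf)
    ultimately show ?thesis unfolding u_def by simp
  qed
  have ecard: "int (card P) = m + 1"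
  proof -
    have "card P > 0" using A0 finP card_gt_0_iff by blast
    then have "card P \<ge> 1" by simp
    then show ?thesis using A0 finP by (simp add: m_def P'_def card_Diff_singleton of_nat_diff)
  qed
  have emax: "int (Max (card ` P)) = u + 1" unfolding u_def a_def by simp
  have esq: "int (\<Sum>A\<in>P. (card A)^2) = (u+1)^2 + S + 2*T + m"
  proof -
    have "(\<Sum>A\<in>P. (card A)^2) = a^2 + (\<Sum>A\<in>P'. (card A)^2)" using A0 finP unfolding P'_def
      by (simp add: sum.remove)
    moreover have "(\<Sum>A\<in>P'. int ((card A)^2)) = (\<Sum>A\<in>P'. (c A)^2 + 2 * c A + 1)"
      by (rule sum.cong) (auto simp: c_def power2_eq_square algebra_simps)
    moreover have "(\<Sum>A\<in>P'. (c A)^2 + 2 * c A + 1) = S + 2*T + m"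
      unfolding S_def T_def m_def by (simp add: sum.distrib sum_distrib_left)
    ultimately show ?thesis unfolding u_def by simp
  qed
  show ?thesis
    apply (rule that[of q u T S m])
    using q0 qu qT_S2 S0 SqT T0 m0 mT eN ecard emax esq by auto
qed

definition Gb :: "nat \<Rightarrow> int \<Rightarrow> int" where
 "Gb N s = (if odd s then s^2 - 1 else if s = 10 \<and> N \<ge> 8 then 96
            else if s = 16 \<and> N \<ge> 12 then 240 else s^2 - 2*s + 8)"

lemma Gb_ge: "s^2 - 2*s + 8 \<le> Gb N s \<or> odd s"
  unfolding Gb_def by auto

lemma combine:
  fixes u T S s :: int and N :: nat
  assumes u0: "0 \<le> u" and T0: "0 \<le> T" and hs: "2*u+1+T \<le> s"
    and ev: "even T \<Longrightarrow> 4*(u*(u+1)+T+S)+1 \<le> (2*u+1+T)^2"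
    and od: "odd T \<Longrightarrow> \<not>(u=3\<and>T=3) \<Longrightarrow> \<not>(u=5\<and>T=5) \<Longrightarrow>
             4*(u*(u+1)+T+S) + 2*(2*u+1+T) \<le> (2*u+1+T)^2 + 8"
    and e3: "u=3 \<Longrightarrow> T=3 \<Longrightarrow> u*(u+1)+T+S \<le> 24 \<and> N \<ge> 8"
    and e5: "u=5 \<Longrightarrow> T=5 \<Longrightarrow> u*(u+1)+T+S \<le> 60 \<and> N \<ge> 12"
  shows "4*(u*(u+1)+T+S) \<le> Gb N s"
proof -
  define s' where "s' = 2*u+1+T"
  define g where "g = u*(u+1)+T+S"
  have s'1: "1 \<le> s'" using u0 T0 s'_def by simp
  have ss: "s' \<le> s" using hs s'_def by simp
  have Godd: "odd s \<Longrightarrow> Gb N s = s^2 - 1" unfolding Gb_def by simp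
  have Gev: "even s \<Longrightarrow> s^2 - 2*s + 8 \<le> Gb N s" unfolding Gb_def by auto
  show ?thesis
  proof (cases "even T")
    case True
    have A: "4*g + 1 \<le> s'^2" using ev True g_def s'_def by simp
    have so: "odd s'" using True s'_def by simp
    show ?thesis
    proof (cases "odd s")
      case True
      have "s'^2 \<le> s^2" using ss s'1 by (intro power_mono) auto
      then show ?thesis using A Godd True g_def by simp
    next
      case False
      then have "s' \<le> s - 1" using ss so by (cases "s' = s") auto
      then have "s'^2 \<le> (s-1)^2" using s'1 by (intro power_mono) auto
      then show ?thesis using A Gev False g_def by (simp add: power2_eq_square algebra_simps)
    qed
  next
    case False
    note Todd = False
    have se: "even s'" using False s'_def by simp
    show ?thesis
    proof (cases "u=3 \<and> T=3")
      case True
      then have "s' = 10" using s'_def by simp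
      have g24: "g \<le> 24" "N \<ge> 8" using e3 True g_def by auto
      show ?thesis
      proof (cases "s = 10")
        case True then show ?thesis using g24 unfolding Gb_def g_def by simp
      next
        case False
        then have "11 \<le> s" using ss \<open>s' = 10\<close> by simp
        then have "(11::int)^2 \<le> s^2" by (intro power_mono) auto
        moreover have "(10::int)^2 \<le> (s-1)^2" using \<open>11 \<le> s\<close> by (intro power_mono) auto
        ultimately show ?thesis using g24 Gev Godd g_def
          by (cases "odd s") (auto simp: power2_eq_square algebra_simps)
      qed
    next
      case nt3: False
      show ?thesis
      proof (cases "u=5 \<and> T=5")
        case True
        then have "s' = 16" using s'_def by simp
        have g60: "g \<le> 60" "N \<ge> 12" using e5 True g_def by auto
        show ?thesis
        proof (cases "s = 16")
          case True then show ?thesis using g60 unfolding Gb_def g_def by simp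
        next
          case False
          then have "17 \<le> s" using ss \<open>s' = 16\<close> by simp
          then have "(17::int)^2 \<le> s^2" by (intro power_mono) auto
          moreover have "(16::int)^2 \<le> (s-1)^2" using \<open>17 \<le> s\<close> by (intro power_mono) auto
          ultimately show ?thesis using g60 Gev Godd g_def
            by (cases "odd s") (auto simp: power2_eq_square algebra_simps)
        qed
      next
        case nt5: False
        have A: "4*g + 2*s' \<le> s'^2 + 8" using od Todd nt3 nt5 g_def s'_def by simp
        have s'2: "2 \<le> s'" using se s'1 by presburger
        show ?thesis
        proof (cases "s = s'")
          case True
          then show ?thesis using A Gev se g_def by (simp add: algebra_simps)
        next
          case False
          show ?thesis
          proof (cases "odd s")
            case True
            have "(s'-1)^2 \<le> (s-2)^2" using ss False s'1 by (intro power_mono) auto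
            then show ?thesis using A Godd True g_def s'2 ss False
              by (simp add: power2_eq_square algebra_simps)
          next
            case ev2: False
            then have "s' \<le> s - 2" using ss se False by presburger
            then have "(s'-1)^2 \<le> (s-3)^2" using s'1 by (intro power_mono) auto
            then show ?thesis using A Gev ev2 g_def s'2 ss
              by (simp add: power2_eq_square algebra_simps)
          qed
        qed
      qed
    qed
  qed
qed

theorem lemma3:
  fixes N :: nat and r :: int
  assumes "N \<ge> 1" and "- (int N - 1) \<le> r" and "r \<le> int N - 1"
    and "r \<noteq> int N - 2" and "r \<noteq> - (int N - 2)"
  shows "(odd (int N + r) \<longrightarrow>
           real (f_rnk N r) = (real_of_int (int N + r + 1))^2 / 4 + real_of_int (int N - r - 1) / 2)
       \<and> (int N + r = 10 \<and> N \<ge> 8 \<longrightarrow> int (f_rnk N r) = 34 - r)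
       \<and> (int N + r = 16 \<and> N \<ge> 12 \<longrightarrow> int (f_rnk N r) = 76 - r)
       \<and> (even (int N + r) \<and> \<not> (int N + r = 10 \<and> N \<ge> 8) \<and> \<not> (int N + r = 16 \<and> N \<ge> 12) \<longrightarrow>
           real (f_rnk N r) = (real_of_int (int N + r))^2 / 4 + real_of_int (int N - r) / 2 + 2)"
proof -
  define s where "s = int N + r"
  have UB: "4 * int (\<Sum>A\<in>P. (card A)^2) \<le> 4 * int N + Gb N s"
    if P: "partition_on {1..N} P" "dyson_rank P \<le> r" for P
  proof -
    obtain u T q S m :: int where H:
      "0 \<le> q" "q \<le> u" "q \<le> T" "0 \<le> S" "S \<le> q*T" "S \<le> q^2 + (T-q)^2" "0 \<le> T" "0 \<le> m"
      "T \<noteq> 0 \<Longrightarrow> m \<ge> 1"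
      "int N = u + 1 + T + m" "int (card P) = m + 1" "int (Max (card ` P)) = u + 1"
      "int (\<Sum>A\<in>P. (card A)^2) = (u+1)^2 + S + 2*T + m"
      using ub_struct[OF P(1) assms(1)] by metis
    have rk: "u + 1 - (m + 1) \<le> r" using P(2) H unfolding dyson_rank_def by simp
    have "4*(u*(u+1)+T+S) \<le> Gb N s"
    proof (rule combine)
      show "0 \<le> u" using H by simp
      show "0 \<le> T" using H by simp
      show "2*u+1+T \<le> s" using rk H s_def by simp
      show "even T \<Longrightarrow> 4*(u*(u+1)+T+S)+1 \<le> (2*u+1+T)^2"
        using arith_even[of q u T S] H by simp
      show "odd T \<Longrightarrow> \<not>(u=3\<and>T=3) \<Longrightarrow> \<not>(u=5\<and>T=5) \<Longrightarrow>
             4*(u*(u+1)+T+S) + 2*(2*u+1+T) \<le> (2*u+1+T)^2 + 8"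
        using arith_odd[of q u T S] H by simp
      show "u*(u+1)+T+S \<le> 24 \<and> N \<ge> 8" if "u=3" "T=3"
      proof -
        have "S \<le> q*3" using H that by simp
        then show ?thesis using H that by simp
      qed
      show "u*(u+1)+T+S \<le> 60 \<and> N \<ge> 12" if "u=5" "T=5"
      proof -
        have "S \<le> q*5" using H that by simp
        then show ?thesis using H that by simp
      qed
    qed
    then show ?thesis using H by (simp add: power2_eq_square algebra_simps)
  qed
  have s1: "1 \<le> s" using assms s_def by simp
  have LB: "\<exists>P. partition_on {1..N} P \<and> dyson_rank P \<le> r \<and>
              4 * int (\<Sum>A\<in>P. (card A)^2) = 4 * int N + Gb N s"
  proof (cases "odd s")
    case True
    define a where "a = nat ((s+1) div 2)"
    have a2: "2 * int a = s + 1"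
    proof -
      have "2 * ((s+1) div 2) = s + 1" using True by presburger
      moreover have "0 \<le> (s+1) div 2" using s1 by simp
      ultimately show ?thesis unfolding a_def by simp
    qed
    have "1 \<le> a" "a \<le> N" using a2 s1 assms s_def by linarith+
    note C = constr1[OF this]
    define P where "P = insert {1..a} ((\<lambda>i. {i}) ` {a+1..N})"
    have "dyson_rank P = r" unfolding dyson_rank_def P_def using C a2 s_def \<open>a \<le> N\<close>
      by (simp add: of_nat_diff)
    moreover have "4 * int (\<Sum>A\<in>P. (card A)^2) = 4 * int N + Gb N s"
    proof -
      have "int (\<Sum>A\<in>P. (card A)^2) = int a ^2 + int N - int a"
        unfolding P_def using C \<open>a \<le> N\<close> by (simp add: of_nat_diff)
      moreover have "Gb N s = s^2 - 1" unfolding Gb_def using True by simp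
      moreover have "s^2 - 1 = 4 * int a^2 - 4 * int a"
      proof -
        have e: "s = 2 * int a - 1" using a2 by simp
        show ?thesis unfolding e by (simp add: power2_eq_square algebra_simps)
      qed
      ultimately show ?thesis by linarith
    qed
    ultimately show ?thesis using C P_def by auto
  next
    case False
    note sev = False
    have "s \<noteq> 2" using assms s_def by simp
    then have s4: "4 \<le> s" using s1 sev by presburger
    have Nr: "s + 4 \<le> 2 * int N" using assms s_def sev by presburger
    have main2: "\<exists>P. partition_on {1..N} P \<and> dyson_rank P \<le> r \<and>
              4 * int (\<Sum>A\<in>P. (card A)^2) = 4 * int N + (4*int a^2 + 4*int b^2 - 4*int a - 4*int b)"
      if ab: "1 \<le> b" "b \<le> a" "a + b \<le> N" "2 * int a + int b - int N - 2 = r" for a b :: nat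
    proof -
      note C = constr2[OF ab(1-3)]
      define P where "P = insert {1..a} (insert {a+1..a+b} ((\<lambda>i. {i}) ` {a+b+1..N}))"
      have R: "dyson_rank P = r" unfolding dyson_rank_def P_def using C ab
        by (simp add: of_nat_diff)
      have E: "int (\<Sum>A\<in>P. (card A)^2) = int a ^2 + int b^2 + int N - int a - int b"
        unfolding P_def using C ab by (simp add: of_nat_diff)
      have Pp: "partition_on {1..N} P" unfolding P_def using C by simp
      show ?thesis
      proof (intro exI[of _ P] conjI)
        show "partition_on {1..N} P" by (rule Pp)
        show "dyson_rank P \<le> r" using R by simp
        show "4 * int (\<Sum>A\<in>P. (card A)^2) = 4 * int N + (4*int a^2 + 4*int b^2 - 4*int a - 4*int b)"
          using E by linarith
      qed
    qed
    show ?thesis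
    proof (cases "s = 10 \<and> N \<ge> 8")
      case True
      then have "Gb N s = 96" unfolding Gb_def by simp
      then show ?thesis using main2[of 4 4] True s_def by simp
    next
      case n10: False
      show ?thesis
      proof (cases "s = 16 \<and> N \<ge> 12")
        case True
        then have "Gb N s = 240" unfolding Gb_def by simp
        then show ?thesis using main2[of 6 6] True s_def by simp
      next
        case n16: False
        then have G: "Gb N s = s^2 - 2*s + 8" unfolding Gb_def using n10 sev by auto
        define a where "a = nat (s div 2)"
        have a2: "2 * int a = s"
        proof -
          have "2 * (s div 2) = s" using sev by presburger
          moreover have "0 \<le> s div 2" using s1 by simp
          ultimately show ?thesis unfolding a_def by simp
        qed
        have "2 \<le> a" "a + 2 \<le> N" using a2 s4 Nr by linarith+
        moreover have "2 * int a + int 2 - int N - 2 = r" using a2 s_def by simp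
        ultimately obtain P where "partition_on {1..N} P \<and> dyson_rank P \<le> r \<and>
              4 * int (\<Sum>A\<in>P. (card A)^2) = 4 * int N + (4*int a^2 + 4*int 2^2 - 4*int a - 4*int 2)"
          using main2[of 2 a] by auto
        moreover have "4*int a^2 + 4*int 2^2 - 4*int a - 4*int (2::nat) = Gb N s"
        proof -
          have e: "s = 2 * int a" using a2 by simp
          have "s^2 - 2*s + 8 = 4*int a^2 - 4*int a + 8"
            unfolding e by (simp add: power2_eq_square algebra_simps)
          then show ?thesis using G by simp
        qed
        ultimately show ?thesis by metis
      qed
    qed
  qed
  define X where "X = {(\<Sum>A\<in>P. (card A)^2) | P. partition_on {1..N} P \<and> dyson_rank P \<le> r}"
  have finX: "finite X"
  proof -
    have "X = (\<lambda>P. \<Sum>A\<in>P. (card A)^2) ` {P. partition_on {1..N} P \<and> dyson_rank P \<le> r}"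
      unfolding X_def by auto
    moreover have "finite {P. partition_on {1..N} P \<and> dyson_rank P \<le> r}"
      by (rule finite_subset[OF _ finitely_many_partition_on[of "{1..N}"]]) auto
    ultimately show ?thesis by simp
  qed
  obtain P0 where P0: "partition_on {1..N} P0" "dyson_rank P0 \<le> r"
      "4 * int (\<Sum>A\<in>P0. (card A)^2) = 4 * int N + Gb N s" using LB by blast
  have fval: "f_rnk N r = (\<Sum>A\<in>P0. (card A)^2)"
    unfolding f_rnk_def X_def[symmetric]
  proof (rule Max_eqI[OF finX])
    show "y \<le> (\<Sum>A\<in>P0. (card A)^2)" if "y \<in> X" for y
    proof -
      obtain P where "y = (\<Sum>A\<in>P. (card A)^2)" "partition_on {1..N} P" "dyson_rank P \<le> r"
        using \<open>y \<in> X\<close> unfolding X_def by auto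
      then have "4 * int y \<le> 4 * int (\<Sum>A\<in>P0. (card A)^2)" using UB P0(3) by simp
      then have "int y \<le> int (\<Sum>A\<in>P0. (card A)^2)" by linarith
      then show ?thesis by (simp only: of_nat_le_iff)
    qed
    show "(\<Sum>A\<in>P0. (card A)^2) \<in> X" unfolding X_def using P0 by auto
  qed
  have F: "4 * int (f_rnk N r) = 4 * int N + Gb N s" using fval P0 by simp
  have FR: "4 * real (f_rnk N r) = 4 * real N + real_of_int (Gb N s)"
  proof -
    have "real_of_int (4 * int (f_rnk N r)) = real_of_int (4 * int N + Gb N s)" using F by simp
    then show ?thesis by simp
  qed
  show ?thesis
  proof (intro conjI impI)
    assume "odd (int N + r)"
    then have "Gb N s = s^2 - 1" unfolding Gb_def s_def by simp
    then have "4 * real (f_rnk N r) = 4 * real N + (real_of_int s)^2 - 1" using FR by simp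
    then show "real (f_rnk N r) = (real_of_int (int N + r + 1))^2 / 4 + real_of_int (int N - r - 1) / 2"
      unfolding s_def by (simp add: field_simps power2_eq_square)
  next
    assume "int N + r = 10 \<and> N \<ge> 8"
    then have "Gb N s = 96" unfolding Gb_def s_def by simp
    then show "int (f_rnk N r) = 34 - r" using F \<open>int N + r = 10 \<and> N \<ge> 8\<close> by simp
  next
    assume "int N + r = 16 \<and> N \<ge> 12"
    then have "Gb N s = 240" unfolding Gb_def s_def by simp
    then show "int (f_rnk N r) = 76 - r" using F \<open>int N + r = 16 \<and> N \<ge> 12\<close> by simp
  next
    assume h: "even (int N + r) \<and> \<not> (int N + r = 10 \<and> N \<ge> 8) \<and> \<not> (int N + r = 16 \<and> N \<ge> 12)"
    then have "Gb N s = s^2 - 2*s + 8" unfolding Gb_def s_def by auto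
    then have "4 * real (f_rnk N r) = 4 * real N + (real_of_int s)^2 - 2 * real_of_int s + 8" using FR by simp
    then show "real (f_rnk N r) = (real_of_int (int N + r))^2 / 4 + real_of_int (int N - r) / 2 + 2"
      unfolding s_def by (simp add: field_simps power2_eq_square)
  qed
qed

end
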